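(* Let $X$ be a real Banach space, $x \in S(X)$ and $0<t<2$. Suppose there exist $f \in S(X^* )$ and $\alpha \in (0,1)$ such that $x \in S := S(B(X), f, \alpha)$ and $\operatorname{diam}(S) < t/5$. Then \[ s(x, f, t) \geq \min\left\{\frac{f(x) - \alpha}{\alpha}, \frac{t}{20}\right\} > 0. \]
   Context: $B(X)$ is the closed unit ball and $S(X)$ the unit sphere of $X$; $X^*$ is the dual space. For $f \in S(X^* )$ and real $\alpha$, the slice is $S(B(X), f, \alpha) := \{y \in B(X) : f(y) > \alpha\}$. For $0<t<2$, $f \in S(X^* )$ and $x \in S(X)$, define $s(x,f,t) := \inf\{\|x+y\| - 1 : y \in \ker f,\ \|y\| \geq t/4\}$. *)

theory Defs
  imports "HOL-Analysis.Analysis"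
begin

text \<open>Elements of the dual unit sphere S(X*) are represented as bounded linear
  functionals f with operator norm onorm f = 1.\<close>

definition slice :: "('a::real_normed_vector \<Rightarrow> real) \<Rightarrow> real \<Rightarrow> 'a set" where
  "slice f \<alpha> = {y. norm y \<le> 1 \<and> f y > \<alpha>}"

text \<open>s(x,f,t) = inf over kernel elements of norm at least t/4 of (norm(x+y) - 1),
  taken in the extended reals so that the infimum over an empty set is +infinity.\<close>

definition s_param :: "'a::real_normed_vector \<Rightarrow> ('a \<Rightarrow> real) \<Rightarrow> real \<Rightarrow> ereal" where
  "s_param x f t = Inf ((\<lambda>y. ereal (norm (x + y) - 1)) ` {y. f y = 0 \<and> norm y \<ge> t / 4})"

end

theory Submission
  imports Defs
begin

theorem mainTheorem1:
  fixes x :: "'a::banach" and f :: "'a \<Rightarrow> real" and t \<alpha> :: real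
  assumes "norm x = 1" and "0 < t" and "t < 2"
    and "bounded_linear f" and "onorm f = 1"
    and "0 < \<alpha>" and "\<alpha> < 1"
    and "x \<in> slice f \<alpha>"
    and "diameter (slice f \<alpha>) < t / 5"
  shows "s_param x f t \<ge> ereal (min ((f x - \<alpha>) / \<alpha>) (t / 20))
         \<and> min ((f x - \<alpha>) / \<alpha>) (t / 20) > 0"
proof -
  interpret f: bounded_linear f by fact
  define m where "m = min ((f x - \<alpha>) / \<alpha>) (t / 20)"
  have fx: "f x > \<alpha>" using assms(8) by (simp add: slice_def)
  have bnd: "bounded (slice f \<alpha>)"
    by (rule bounded_subset[of "cball 0 1"]) (auto simp: slice_def)
  have dm: "\<And>u v. u \<in> slice f \<alpha> \<Longrightarrow> v \<in> slice f \<alpha> \<Longrightarrow> dist u v < t/5"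
    using diameter_bounded_bound[OF bnd] assms(9) by fastforce
  have key: "m \<le> norm (x + y) - 1" if y: "f y = 0" "norm y \<ge> t/4" for y
  proof (rule ccontr)
    assume "\<not> ?thesis"
    hence lt: "norm (x+y) < 1 + m" by simp
    define l where "l = norm (x+y)"
    have fxy: "f (x+y) = f x" using y by (simp add: f.add)
    show False
    proof (cases "l \<le> 1")
      case True
      hence "x + y \<in> slice f \<alpha>" using fxy fx by (simp add: slice_def l_def)
      from dm[OF this assms(8)] have "norm y < t/5" by (simp add: dist_norm)
      thus False using y assms(2) by simp
    next
      case False
      hence lpos: "l > 0" by simp
      define z where "z = (1/l) *\<^sub>R (x+y)"
      have nz: "norm z = 1" using lpos by (simp add: z_def l_def)
      have "l < f x / \<alpha>"
      proof -
        have "m \<le> (f x - \<alpha>) / \<alpha>" by (simp add: m_def)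
        also have "\<dots> = f x / \<alpha> - 1" using assms(6) by (simp add: field_simps)
        finally show ?thesis using lt l_def by simp
      qed
      hence "l * \<alpha> < f x" using assms(6) by (simp add: field_simps)
      moreover have "f z = f x / l" unfolding z_def f.scaleR using fxy by simp
      ultimately have "l * \<alpha> < l * f z" using lpos by (simp add: field_simps)
      hence "f z > \<alpha>" using lpos by simp
      hence zs: "z \<in> slice f \<alpha>" using nz by (simp add: slice_def)
      have "norm (x + y - z) = l - 1"
      proof -
        have "x + y - z = (1 - 1/l) *\<^sub>R (x+y)" by (simp add: z_def algebra_simps)
        hence "norm (x + y - z) = \<bar>1 - 1/l\<bar> * l" by (simp add: l_def)
        also have "\<dots> = l - 1" using False lpos by (simp add: field_simps)
        finally show ?thesis .
      qed
      moreover have "norm y \<le> norm (z - x) + norm (x + y - z)"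
        using norm_triangle_ineq[of "z - x" "x + y - z"] by simp
      moreover have "norm (z - x) < t/5" using dm[OF zs assms(8)] by (simp add: dist_norm)
      moreover have "m \<le> t/20" unfolding m_def by (rule min.cobounded2)
      ultimately show False using y lt l_def by simp
    qed
  qed
  have "ereal m \<le> s_param x f t"
    unfolding s_param_def by (rule Inf_greatest) (auto intro!: key)
  moreover have "m > 0" using fx assms(2,6) by (simp add: m_def)
  ultimately show ?thesis by (simp add: m_def)
qed

end
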